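(* Let $(X,d)$ be an injective metric space and let $(x,y,t)\in X\times X\times[0,1]$. For every point $z\in\mathbb{E}_D[(1-t)\delta_x+t\delta_y]$ there exists a reversible conical bicombing $\sigma$ on $X$ such that $\sigma_{xy}(t)=z$. In particular, if $X$ admits only one reversible conical bicombing, then the set $\mathbb{E}_D[(1-t)\delta_x+t\delta_y]$ is a singleton.
   Context: A metric space $X$ is injective if for every metric space $B$, subset $A\subset B$ and 1-Lipschitz map $f\colon A\to X$ there is a 1-Lipschitz extension $B\to X$. For a Radon probability measure $\mu$ on $X$ with finite first moment, $W_1$ denotes the first Wasserstein distance $W_1(\mu,\nu)=\inf_\gamma\int d(x,y)\,d\gamma(x,y)$ over couplings $\gamma$ of $(\mu,\nu)$, and the Doss expectation is $\mathbb{E}_D[\mu]:=\{z\in X: d(z,w)\le W_1(\mu,\delta_w)\text{ for all }w\in X\}$. A bicombing is a map $\sigma\colon X\times X\times[0,1]\to X$ such that each $\sigma_{xy}:=\sigma(x,y,\cdot)$ is a geodesic from $x$ to $y$ ($\sigma_{xy}(0)=x$, $\sigma_{xy}(1)=y$, $d(\sigma_{xy}(s),\sigma_{xy}(t))=|s-t|d(x,y)$); it is conical if $d(\sigma_{xy}(t),\sigma_{x'y'}(t))\le(1-t)d(x,x')+t\,d(y,y')$ for all $x,y,x',y'$, $t$, and reversible if $\sigma_{xy}(t)=\sigma_{yx}(1-t)$. *)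

theory Defs
  imports "HOL-Analysis.Analysis" "HOL-Probability.Probability"
begin

text \<open>The test spaces B are
  metric spaces in the sense of the locale Metric_space whose carrier lives in the
  type 'b (we instantiate 'b with "'a set").\<close>
definition injective_wrt :: "'b itself \<Rightarrow> 'a::metric_space itself \<Rightarrow> bool" where
  "injective_wrt _ _ \<longleftrightarrow>
     (\<forall>(B::'b set) dB (A::'b set) (f::'b \<Rightarrow> 'a).
        Metric_space B dB \<and> A \<subseteq> B \<and>
        (\<forall>a\<in>A. \<forall>a'\<in>A. dist (f a) (f a') \<le> dB a a') \<longrightarrow>
        (\<exists>g::'b \<Rightarrow> 'a. (\<forall>a\<in>A. g a = f a) \<and>
                      (\<forall>b\<in>B. \<forall>b'\<in>B. dist (g b) (g b') \<le> dB b b')))"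

abbreviation injective_metric_space :: "'a::metric_space itself \<Rightarrow> bool" where
  "injective_metric_space T \<equiv> injective_wrt TYPE('a set) T"

text \<open>First Wasserstein distance between (discrete) probability measures; couplings
  of discrete measures are automatically discrete.\<close>
definition W1 :: "'a::metric_space pmf \<Rightarrow> 'a pmf \<Rightarrow> real" where
  "W1 \<mu> \<nu> = Inf {measure_pmf.expectation \<gamma> (\<lambda>(a, b). dist a b) | \<gamma>.
                    map_pmf fst \<gamma> = \<mu> \<and> map_pmf snd \<gamma> = \<nu>}"

definition doss_expectation :: "'a::metric_space pmf \<Rightarrow> 'a set" where
  "doss_expectation \<mu> = {z. \<forall>w. dist z w \<le> W1 \<mu> (return_pmf w)}"

definition two_point :: "'a \<Rightarrow> 'a \<Rightarrow> real \<Rightarrow> 'a pmf" where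
  "two_point x y t = map_pmf (\<lambda>b. if b then y else x) (bernoulli_pmf t)"

definition bicombing :: "('a::metric_space \<Rightarrow> 'a \<Rightarrow> real \<Rightarrow> 'a) \<Rightarrow> bool" where
  "bicombing \<sigma> \<longleftrightarrow> (\<forall>x y. \<sigma> x y 0 = x \<and> \<sigma> x y 1 = y \<and>
      (\<forall>s\<in>{0..1}. \<forall>t\<in>{0..1}. dist (\<sigma> x y s) (\<sigma> x y t) = \<bar>s - t\<bar> * dist x y))"

definition conical :: "('a::metric_space \<Rightarrow> 'a \<Rightarrow> real \<Rightarrow> 'a) \<Rightarrow> bool" where
  "conical \<sigma> \<longleftrightarrow> (\<forall>x y x' y'. \<forall>t\<in>{0..1}.
      dist (\<sigma> x y t) (\<sigma> x' y' t) \<le> (1 - t) * dist x x' + t * dist y y')"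

definition reversible :: "('a \<Rightarrow> 'a \<Rightarrow> real \<Rightarrow> 'a) \<Rightarrow> bool" where
  "reversible \<sigma> \<longleftrightarrow> (\<forall>x y. \<forall>t\<in>{0..1}. \<sigma> x y t = \<sigma> y x (1 - t))"

definition rc_bicombing :: "('a::metric_space \<Rightarrow> 'a \<Rightarrow> real \<Rightarrow> 'a) \<Rightarrow> bool" where
  "rc_bicombing \<sigma> \<longleftrightarrow> bicombing \<sigma> \<and> conical \<sigma> \<and> reversible \<sigma>"

end

theory Submission
  imports Defs
begin


lemma W1_two_point:
  fixes x y w :: "'a::metric_space"
  assumes t: "t \<in> {0..1}"
  shows "W1 (two_point x y t) (return_pmf w) = (1-t)*dist x w + t*dist y w"
proof -
  let ?V = "(1-t)*dist x w + t*dist y w"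
  let ?S = "{measure_pmf.expectation \<gamma> (\<lambda>(a, b). dist a b) | \<gamma>.
                    map_pmf fst \<gamma> = two_point x y t \<and> map_pmf snd \<gamma> = return_pmf w}"
  have ev: "measure_pmf.expectation (map_pmf (\<lambda>a. (a, w)) (two_point x y t)) (\<lambda>(a, b). dist a b) = ?V"
    using t by (simp add: two_point_def)
  have mem: "?S = {?V}"
  proof (intro equalityI subsetI)
    fix e assume "e \<in> ?S"
    then obtain \<gamma> where e: "e = measure_pmf.expectation \<gamma> (\<lambda>(a, b). dist a b)"
      and m1: "map_pmf fst \<gamma> = two_point x y t" and m2: "map_pmf snd \<gamma> = return_pmf w" by blast
    have "snd ` set_pmf \<gamma> = {w}" using arg_cong[OF m2, of set_pmf] by simp
    hence "\<forall>p\<in>set_pmf \<gamma>. snd p = w" by auto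
    hence "\<gamma> = map_pmf (\<lambda>p. (fst p, w)) \<gamma>"
      by (metis (mono_tags, lifting) map_pmf_cong map_pmf_ident prod.collapse)
    also have "\<dots> = map_pmf (\<lambda>a. (a, w)) (two_point x y t)"
      by (simp add: m1[symmetric] map_pmf_comp)
    finally show "e \<in> {?V}" using e ev by simp
  next
    fix e assume "e \<in> {?V}"
    then show "e \<in> ?S" using ev
      by (intro CollectI exI[of _ "map_pmf (\<lambda>a. (a, w)) (two_point x y t)"])
         (simp add: map_pmf_comp)
  qed
  show ?thesis unfolding W1_def mem by simp
qed

lemma doss_two_point:
  fixes x y :: "'a::metric_space"
  assumes t: "t \<in> {0..1}"
  shows "doss_expectation (two_point x y t) = {z. \<forall>w. dist z w \<le> (1-t)*dist x w + t*dist y w}"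
  unfolding doss_expectation_def W1_two_point[OF t] ..



lemma midpoint_exists:
  fixes p q :: "'a::metric_space"
  assumes inj: "injective_metric_space TYPE('a)"
  shows "\<exists>m. dist p m \<le> dist p q / 2 \<and> dist m q \<le> dist p q / 2"
proof (cases "p = q")
  case True then show ?thesis by (intro exI[of _ p]) simp
next
  case False
  define \<delta> where "\<delta> = dist p q"
  have dpos: "\<delta> > 0" using False by (simp add: \<delta>_def)
  define B :: "'a set set" where "B = {{}, {p}, {q}}"
  define dB :: "'a set \<Rightarrow> 'a set \<Rightarrow> real" where
    "dB S S' = (if S = S' then 0 else if S = {} \<or> S' = {} then \<delta>/2 else \<delta>)" for S S'
  have ms: "Metric_space B dB"
  proof
    fix S S' S'' :: "'a set"
    have le: "dB S S'' \<le> \<delta>" "S \<noteq> S' \<Longrightarrow> dB S S' \<ge> \<delta>/2" "S' \<noteq> S'' \<Longrightarrow> dB S' S'' \<ge> \<delta>/2"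
      using dpos by (auto simp: dB_def)
    show "dB S S'' \<le> dB S S' + dB S' S''"
    proof (cases "S = S' \<or> S' = S''")
      case True then show ?thesis by (auto simp: dB_def)
    next
      case False then show ?thesis using le by linarith
    qed
  qed (use dpos in \<open>auto simp: dB_def\<close>)
  define A :: "'a set set" where "A = {{p}, {q}}"
  define f :: "'a set \<Rightarrow> 'a" where "f S = (if S = {p} then p else q)" for S
  have "\<forall>a\<in>A. \<forall>a'\<in>A. dist (f a) (f a') \<le> dB a a'"
    using False by (auto simp: A_def f_def dB_def \<delta>_def dist_commute)
  moreover have "A \<subseteq> B" by (auto simp: A_def B_def)
  ultimately obtain g :: "'a set \<Rightarrow> 'a" where g1: "\<forall>a\<in>A. g a = f a"
      and g2: "\<forall>b\<in>B. \<forall>b'\<in>B. dist (g b) (g b') \<le> dB b b'"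
    using inj ms unfolding injective_wrt_def by blast
  have "dist (g {p}) (g {}) \<le> dB {p} {}" "dist (g {}) (g {q}) \<le> dB {} {q}"
    using g2 by (auto simp: B_def)
  moreover have "g {p} = p" "g {q} = q" using g1 False by (auto simp: A_def f_def)
  ultimately show ?thesis by (intro exI[of _ "g {}"]) (simp add: dB_def \<delta>_def)
qed


lemma infinite_space:
  fixes p q :: "'a::metric_space"
  assumes inj: "injective_metric_space TYPE('a)" and pq: "p \<noteq> q"
  shows "infinite (UNIV :: 'a set)"
proof
  assume fin: "finite (UNIV :: 'a set)"
  define Ds where "Ds = (\<lambda>(a,b). dist a b) ` {(a::'a,b). a \<noteq> b}"
  have fp: "finite (UNIV :: ('a \<times> 'a) set)" using fin by (simp add: finite_Prod_UNIV)
  have "finite Ds" unfolding Ds_def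
    by (rule finite_imageI, rule finite_subset[OF _ fp]) simp
  moreover have "dist p q \<in> Ds" using pq by (auto simp: Ds_def)
  ultimately have mn: "Min Ds \<in> Ds" "\<And>e. e \<in> Ds \<Longrightarrow> Min Ds \<le> e" by (auto intro: Min_in)
  have "\<forall>d\<in>Ds. \<exists>a b::'a. a \<noteq> b \<and> dist a b = d"
  proof
    fix d assume "d \<in> Ds"
    then obtain a b :: 'a where "a \<noteq> b" "d = dist a b" unfolding Ds_def by auto
    thus "\<exists>a b::'a. a \<noteq> b \<and> dist a b = d" by blast
  qed
  then obtain a b :: 'a where ab: "a \<noteq> b" "dist a b = Min Ds" using mn(1) by blast
  obtain m where m: "dist a m \<le> dist a b / 2" "dist m b \<le> dist a b / 2"
    using midpoint_exists[OF inj] by blast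
  have pos: "dist a b > 0" using ab(1) by simp
  show False
  proof (cases "a = m")
    case True then show ?thesis using m pos by simp
  next
    case False
    then have "dist a m \<in> Ds" by (auto simp: Ds_def)
    then have "Min Ds \<le> dist a m" using mn(2) by blast
    then show ?thesis using ab m pos by linarith
  qed
qed


lemma coding_exists:
  assumes inf: "infinite (UNIV :: 'a set)"
  shows "\<exists>c :: 'a \<times> 'a \<times> real \<Rightarrow> 'a set. inj c"
proof -
  obtain P :: "'a \<times> 'a \<Rightarrow> 'a" where P: "bij_betw P (UNIV \<times> UNIV) UNIV"
    using card_of_Times_same_infinite[OF inf] card_of_ordIso by blast
  hence Pi: "inj P" by (simp add: bij_betw_def)
  obtain e :: "nat \<Rightarrow> 'a" where e: "inj e" using infinite_countable_subset[OF inf] by blast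
  define R :: "real \<Rightarrow> nat set" where "R s = insert 0 (Suc ` {n. of_rat (from_nat n) < s})" for s
  define c where "c = (\<lambda>(u::'a, v::'a, s::real). (\<lambda>n. P (P (u, v), e n)) ` R s)"
  have injn: "inj (\<lambda>n. P (P (u, v), e n))" for u v
  proof (rule injI)
    fix n m assume "P (P (u, v), e n) = P (P (u, v), e m)"
    hence "(P (u, v), e n) = (P (u, v), e m)" using injD[OF Pi] by blast
    thus "n = m" using injD[OF e] by blast
  qed
  have "inj c"
  proof (rule injI)
    fix b b' assume eq: "c b = c b'"
    obtain u v s where b: "b = (u,v,s)" by (cases b) auto
    obtain u' v' s' where b': "b' = (u',v',s')" by (cases b') auto
    have "P (P (u, v), e 0) \<in> c b" by (simp add: b c_def R_def)
    hence "P (P (u, v), e 0) \<in> (\<lambda>n. P (P (u', v'), e n)) ` R s'" using eq by (simp add: b' c_def)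
    then obtain n where "P (P (u, v), e 0) = P (P (u', v'), e n)" by blast
    hence "(P (u, v), e 0) = (P (u', v'), e n)" using injD[OF Pi] by blast
    hence "P (u, v) = P (u', v')" by simp
    hence "(u, v) = (u', v')" using injD[OF Pi] by blast
    hence uv: "u = u'" "v = v'" by simp_all
    have "R s = R s'"
    proof -
      have "(\<lambda>n. P (P (u, v), e n)) ` R s = (\<lambda>n. P (P (u, v), e n)) ` R s'"
        using eq by (simp add: b b' c_def uv)
      thus ?thesis using injn by (simp add: inj_image_eq_iff)
    qed
    have Req: "{n. of_rat (from_nat n) < s} = {n. of_rat (from_nat n) < s'}"
    proof -
      have "Suc ` {n. of_rat (from_nat n) < s} = R s - {0}" unfolding R_def by auto
      also have "\<dots> = R s' - {0}" using \<open>R s = R s'\<close> by simp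
      also have "\<dots> = Suc ` {n. of_rat (from_nat n) < s'}" unfolding R_def by auto
      finally show ?thesis by (simp add: inj_image_eq_iff)
    qed
    have key: "\<not> (a < b')" if "{n. of_rat (from_nat n) < a} = {n. of_rat (from_nat n) < b'}" for a b' :: real
    proof
      assume "a < b'"
      then obtain r where r: "a < of_rat r" "of_rat r < b'" using of_rat_dense by blast
      obtain n where n: "r = from_nat n" using surj_from_nat by (metis surjD)
      have "n \<in> {n. of_rat (from_nat n) < b'}" using r n by simp
      hence "n \<in> {n. of_rat (from_nat n) < a}" using that by simp
      thus False using r n by simp
    qed
    have "s = s'" using key[OF Req] key[OF Req[symmetric]] by linarith
    then show "b = b'" using b b' uv by simp
  qed
  then show ?thesis by blast
qed


definition phi :: "'a::metric_space \<Rightarrow> 'a \<times> 'a \<times> real \<Rightarrow> real" where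
  "phi w b = (case b of (u, v, s) \<Rightarrow> (1 - s) * dist w u + s * dist w v)"

definition KK :: "'a::metric_space \<times> 'a \<times> real \<Rightarrow> 'a \<times> 'a \<times> real \<Rightarrow> real" where
  "KK b b' = (case b of (u, v, s) \<Rightarrow> case b' of (u', v', s') \<Rightarrow>
      \<bar>s - s'\<bar> * dist u v + \<bar>1 - s'\<bar> * dist u u' + \<bar>s'\<bar> * dist v v')"

definition DD :: "'a::metric_space \<times> 'a \<times> real \<Rightarrow> 'a \<times> 'a \<times> real \<Rightarrow> real" where
  "DD b b' = (SUP w. \<bar>phi w b - phi w b'\<bar>)"

lemma absdist: "\<bar>dist w u - dist w u'\<bar> \<le> dist u (u'::'a::metric_space)"
  by (metis abs_le_iff dist_commute dist_triangle2 dist_triangle3 diff_le_eq add.commute minus_diff_eq)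

lemma phi_geo: "\<bar>phi w (u, v, s) - phi w (u, v, s')\<bar> \<le> \<bar>s - s'\<bar> * dist u v"
proof -
  have "phi w (u, v, s) - phi w (u, v, s') = (s - s') * (dist w v - dist w u)"
    by (simp add: phi_def algebra_simps)
  also have "\<bar>\<dots>\<bar> = \<bar>s - s'\<bar> * \<bar>dist w v - dist w u\<bar>" by (simp add: abs_mult)
  also have "\<dots> \<le> \<bar>s - s'\<bar> * dist u v"
    by (intro mult_left_mono) (use absdist[of w v u] in \<open>auto simp: dist_commute\<close>)
  finally show ?thesis .
qed

lemma phi_same: "\<bar>phi w (u, v, s) - phi w (u', v', s)\<bar> \<le> \<bar>1 - s\<bar> * dist u u' + \<bar>s\<bar> * dist v v'"
proof -
  have "phi w (u, v, s) - phi w (u', v', s) = (1 - s) * (dist w u - dist w u') + s * (dist w v - dist w v')"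
    by (simp add: phi_def algebra_simps)
  also have "\<bar>\<dots>\<bar> \<le> \<bar>1 - s\<bar> * \<bar>dist w u - dist w u'\<bar> + \<bar>s\<bar> * \<bar>dist w v - dist w v'\<bar>"
    by (metis abs_mult abs_triangle_ineq)
  also have "\<dots> \<le> \<bar>1 - s\<bar> * dist u u' + \<bar>s\<bar> * dist v v'"
  proof (intro add_mono mult_left_mono)
    show "\<bar>dist w u - dist w u'\<bar> \<le> dist u u'"
      by (metis abs_le_iff dist_commute dist_triangle2 dist_triangle3 diff_le_eq add.commute minus_diff_eq)
    show "\<bar>dist w v - dist w v'\<bar> \<le> dist v v'"
      by (metis abs_le_iff dist_commute dist_triangle2 dist_triangle3 diff_le_eq add.commute minus_diff_eq)
  qed auto
  finally show ?thesis .
qed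

lemma phi_KK: "\<bar>phi w b - phi w b'\<bar> \<le> KK b b'"
proof -
  obtain u v s where b: "b = (u, v, s)" by (cases b) auto
  obtain u' v' s' where b': "b' = (u', v', s')" by (cases b') auto
  have "\<bar>phi w (u, v, s) - phi w (u', v', s')\<bar> \<le>
        \<bar>phi w (u, v, s) - phi w (u, v, s')\<bar> + \<bar>phi w (u, v, s') - phi w (u', v', s')\<bar>" by linarith
  also have "\<dots> \<le> \<bar>s - s'\<bar> * dist u v + (\<bar>1 - s'\<bar> * dist u u' + \<bar>s'\<bar> * dist v v')"
    by (intro add_mono phi_geo phi_same)
  finally show ?thesis by (simp add: b b' KK_def)
qed

lemma DD_bdd: "bdd_above (range (\<lambda>w. \<bar>phi w b - phi w b'\<bar>))"
  by (rule bdd_aboveI[of _ "KK b b'"]) (auto intro: phi_KK)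

lemma DD_ge: "\<bar>phi w b - phi w b'\<bar> \<le> DD b b'"
  unfolding DD_def by (rule cSUP_upper[OF _ DD_bdd]) simp

lemma DD_le: "(\<And>w. \<bar>phi w b - phi w b'\<bar> \<le> c) \<Longrightarrow> DD b b' \<le> c"
  unfolding DD_def by (rule cSUP_least) auto

lemma DD_nonneg: "0 \<le> DD b b'"
  using DD_ge[of undefined b b'] by linarith

lemma DD_refl: "DD b b = 0"
  using DD_le[of b b 0] DD_nonneg[of b b] by simp

lemma DD_sym: "DD b b' = DD b' b"
  unfolding DD_def by (simp add: abs_minus_commute)

lemma DD_tri: "DD b b'' \<le> DD b b' + DD b' b''"
proof (rule DD_le)
  fix w
  have "\<bar>phi w b - phi w b''\<bar> \<le> \<bar>phi w b - phi w b'\<bar> + \<bar>phi w b' - phi w b''\<bar>" by linarith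
  also have "\<dots> \<le> DD b b' + DD b' b''" by (intro add_mono DD_ge)
  finally show "\<bar>phi w b - phi w b''\<bar> \<le> DD b b' + DD b' b''" .
qed

lemma DD_cone:
  assumes "s \<in> {0..1}" shows "DD (u, v, s) (u', v', s) \<le> (1 - s) * dist u u' + s * dist v v'"
proof (rule DD_le)
  fix w
  have "\<bar>1 - s\<bar> = 1 - s" "\<bar>s\<bar> = s" using assms by auto
  thus "\<bar>phi w (u, v, s) - phi w (u', v', s)\<bar> \<le> (1 - s) * dist u u' + s * dist v v'"
    using phi_same[of w u v s u' v'] by simp
qed

lemma DD_geo: "DD (u, v, s) (u, v, s') \<le> \<bar>s - s'\<bar> * dist u v"
  by (rule DD_le) (rule phi_geo)

lemma DD_rev: "DD (u, v, s) (v, u, 1 - s) = 0"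
proof -
  have "DD (u, v, s) (v, u, 1 - s) \<le> 0"
    by (rule DD_le) (simp add: phi_def algebra_simps)
  thus ?thesis using DD_nonneg[of "(u, v, s)" "(v, u, 1 - s)"] by linarith
qed

definition rr :: "'a::metric_space \<times> 'a \<times> real \<Rightarrow> 'a \<times> 'a \<times> real" where
  "rr b = (SOME b'. DD b b' = 0)"

lemma rr: "DD b (rr b) = 0"
  unfolding rr_def by (rule someI[of _ b]) (rule DD_refl)

lemma DD_zero_cong: "DD b b' = 0 \<Longrightarrow> DD b c = DD b' c"
  using DD_tri[of b c b'] DD_tri[of b' c b] DD_sym[of b b'] by linarith

lemma rr_eq: "DD b b' = 0 \<Longrightarrow> rr b = rr b'"
  unfolding rr_def using DD_zero_cong[of b b'] by simp

lemma DD_rr: "DD (rr b) (rr b') = DD b b'"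
proof -
  have "DD (rr b) (rr b') = DD b (rr b')"
    using DD_zero_cong[of b "rr b"] rr[of b] DD_sym by metis
  also have "\<dots> = DD b b'"
    using DD_zero_cong[of b' "rr b'" b] rr[of b'] DD_sym by metis
  finally show ?thesis .
qed

lemma rr_rr: "rr (rr b) = rr b"
  using rr_eq[OF rr[of b]] by simp



definition FF :: "'a \<Rightarrow> 'a \<Rightarrow> real \<Rightarrow> 'a \<Rightarrow> 'a \<times> 'a \<times> real \<Rightarrow> 'a" where
  "FF x y t z b = (if b = (x, y, t) then z else (case b of (u, v, s) \<Rightarrow> if s = 0 then u else v))"

definition AS :: "'a \<Rightarrow> 'a \<Rightarrow> real \<Rightarrow> ('a \<times> 'a \<times> real) set" where
  "AS x y t = {b. snd (snd b) = 0 \<or> snd (snd b) = 1 \<or> b = (x, y, t)}"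

lemma k1:
  fixes x y z w :: "'a::metric_space"
  assumes doss: "\<forall>w. dist z w \<le> (1-t)*dist x w + t*dist y w" and b: "b \<in> AS x y t"
  shows "dist w (FF x y t z b) \<le> phi w b"
proof -
  obtain u v s where bb: "b = (u, v, s)" by (cases b) auto
  show ?thesis
  proof (cases "b = (x, y, t)")
    case True
    then show ?thesis using doss[rule_format, of w] by (simp add: FF_def phi_def dist_commute bb)
  next
    case False
    then have "s = 0 \<or> s = 1" using b unfolding AS_def bb by auto
    then show ?thesis using False by (auto simp: FF_def phi_def bb)
  qed
qed

lemma k2:
  assumes b: "b \<in> AS x y t" and nb: "b \<noteq> (x, y, t)"
  shows "phi (FF x y t z b) b = 0"
proof -
  obtain u v s where bb: "b = (u, v, s)" by (cases b) auto
  then have "s = 0 \<or> s = 1" using b nb unfolding AS_def by auto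
  then show ?thesis using nb by (auto simp: FF_def phi_def bb)
qed

lemma key:
  fixes x y z :: "'a::metric_space"
  assumes doss: "\<forall>w. dist z w \<le> (1-t)*dist x w + t*dist y w"
    and b: "b \<in> AS x y t" and b': "b' \<in> AS x y t"
  shows "dist (FF x y t z b) (FF x y t z b') \<le> DD b b'"
proof -
  have gen: "dist (FF x y t z b) (FF x y t z b') \<le> DD b b'"
    if b: "b \<in> AS x y t" and b': "b' \<in> AS x y t" and nb: "b \<noteq> (x, y, t)" for b b'
  proof -
    let ?w = "FF x y t z b"
    have "dist ?w (FF x y t z b') \<le> phi ?w b'" by (rule k1[OF doss b'])
    also have "\<dots> = \<bar>phi ?w b - phi ?w b'\<bar>"
    proof -
      have "0 \<le> phi ?w b'" using k1[OF doss b', of ?w] zero_le_dist[of ?w "FF x y t z b'"] by linarith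
      then show ?thesis using k2[OF b nb, of z] by simp
    qed
    also have "\<dots> \<le> DD b b'" by (rule DD_ge)
    finally show ?thesis .
  qed
  show ?thesis
  proof (cases "b = (x, y, t)")
    case False then show ?thesis using gen b b' by blast
  next
    case True
    show ?thesis
    proof (cases "b' = (x, y, t)")
      case True then show ?thesis using \<open>b = (x,y,t)\<close> by (simp add: DD_nonneg)
    next
      case False then show ?thesis using gen[OF b' b] by (simp add: dist_commute DD_sym)
    qed
  qed
qed

lemma construct:
  fixes x y z :: "'a::metric_space"
  assumes inj: "injective_metric_space TYPE('a)"
    and doss: "\<forall>w. dist z w \<le> (1-t)*dist x w + t*dist y w"
  shows "\<exists>\<sigma>. rc_bicombing \<sigma> \<and> \<sigma> x y t = z"
proof (cases "\<forall>p q :: 'a. p = q")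
  case True
  then have eq: "\<And>p q :: 'a. p = q" by blast
  have dz: "dist u v = 0" for u v :: 'a using eq[of u v] by simp
  have eq2: "(p = q) \<longleftrightarrow> True" for p q :: 'a using eq[of p q] by simp
  have b: "bicombing (\<lambda>(u::'a) v (s::real). u)" unfolding bicombing_def
    by (simp add: dz eq2)
  have cc: "conical (\<lambda>(u::'a) v (s::real). u)" unfolding conical_def
  proof (intro allI ballI)
    fix u v u' v' :: 'a and t :: real
    show "dist u u' \<le> (1 - t) * dist u u' + t * dist v v'" by (simp add: dz)
  qed
  have r: "reversible (\<lambda>(u::'a) v (s::real). u)" unfolding reversible_def
    by (simp add: eq2)
  have "rc_bicombing (\<lambda>(u::'a) v (s::real). u)" using b cc r by (simp add: rc_bicombing_def)
  then show ?thesis by (intro exI[of _ "\<lambda>u v s. u"] conjI) (simp_all add: eq[of x z])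
next
  case False
  then obtain p q :: 'a where "p \<noteq> q" by blast
  then have inf: "infinite (UNIV :: 'a set)" using infinite_space[OF inj] by blast
  obtain c :: "'a \<times> 'a \<times> real \<Rightarrow> 'a set" where c: "inj c" using coding_exists[OF inf] by blast
  have ic: "inv c (c b) = b" for b using c by simp
  define B where "B = range (\<lambda>b. c (rr b))"
  define dB where "dB S S' = DD (inv c S) (inv c S')" for S S'
  have dBc: "dB (c (rr b)) (c (rr b')) = DD b b'" for b b'
    by (simp add: dB_def ic DD_rr)
  have ms: "Metric_space B dB"
  proof
    show "0 \<le> dB S S'" for S S' by (simp add: dB_def DD_nonneg)
    show "dB S S' = dB S' S" for S S' by (simp add: dB_def DD_sym)
    show "dB S S' = 0 \<longleftrightarrow> S = S'" if SB: "S \<in> B" "S' \<in> B" for S S'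
    proof -
      obtain b b' where S: "S = c (rr b)" and S': "S' = c (rr b')" using SB unfolding B_def by blast
      have "DD b b' = 0 \<longleftrightarrow> rr b = rr b'"
      proof
        assume "DD b b' = 0" then show "rr b = rr b'" by (rule rr_eq)
      next
        assume "rr b = rr b'" then show "DD b b' = 0" using DD_rr[of b b'] DD_refl by metis
      qed
      then show ?thesis using c by (auto simp: S S' dBc inj_eq)
    qed
    show "dB S S'' \<le> dB S S' + dB S' S''" for S S' S'' by (simp add: dB_def DD_tri)
  qed
  define A where "A = (\<lambda>b. c (rr b)) ` AS x y t"
  define pick where "pick S = (SOME b. b \<in> AS x y t \<and> c (rr b) = S)" for S
  define f where "f S = FF x y t z (pick S)" for S
  have pick: "pick (c (rr b)) \<in> AS x y t \<and> rr (pick (c (rr b))) = rr b" if "b \<in> AS x y t" for b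
  proof -
    have "pick (c (rr b)) \<in> AS x y t \<and> c (rr (pick (c (rr b)))) = c (rr b)"
      unfolding pick_def by (rule someI[of _ b]) (use that in simp)
    then show ?thesis using c by (simp add: inj_eq)
  qed
  have lip: "\<forall>a\<in>A. \<forall>a'\<in>A. dist (f a) (f a') \<le> dB a a'"
  proof (intro ballI)
    fix a a' assume "a \<in> A" "a' \<in> A"
    then obtain b b' where b: "b \<in> AS x y t" "a = c (rr b)" and b': "b' \<in> AS x y t" "a' = c (rr b')"
      by (auto simp: A_def)
    have "dist (f a) (f a') \<le> DD (pick a) (pick a')"
      unfolding f_def using key[OF doss] pick b b' by blast
    also have "\<dots> = DD (rr (pick a)) (rr (pick a'))" by (simp add: DD_rr)
    also have "\<dots> = DD (rr b) (rr b')" using pick b b' by simp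
    also have "\<dots> = dB a a'" using b b' dBc DD_rr by simp
    finally show "dist (f a) (f a') \<le> dB a a'" .
  qed
  have AB: "A \<subseteq> B" by (auto simp: A_def B_def)
  from inj[unfolded injective_wrt_def]
  have "\<exists>g::'a set \<Rightarrow> 'a. (\<forall>a\<in>A. g a = f a) \<and> (\<forall>b\<in>B. \<forall>b'\<in>B. dist (g b) (g b') \<le> dB b b')"
    using ms lip AB by blast
  then obtain g :: "'a set \<Rightarrow> 'a" where g1: "\<forall>a\<in>A. g a = f a"
    and g2: "\<forall>b\<in>B. \<forall>b'\<in>B. dist (g b) (g b') \<le> dB b b'" by blast
  define \<sigma> where "\<sigma> u v s = g (c (rr (u, v, s)))" for u v s
  have slip: "dist (\<sigma> u v s) (\<sigma> u' v' s') \<le> DD (u, v, s) (u', v', s')" for u v s u' v' s'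
  proof -
    have "c (rr (u, v, s)) \<in> B" "c (rr (u', v', s')) \<in> B" by (simp_all add: B_def)
    then have "dist (\<sigma> u v s) (\<sigma> u' v' s') \<le> dB (c (rr (u, v, s))) (c (rr (u', v', s')))"
      using g2 unfolding \<sigma>_def by blast
    then show ?thesis by (simp add: dBc)
  qed
  have sA: "g (c (rr b)) = FF x y t z b" if b: "b \<in> AS x y t" for b
  proof -
    have "g (c (rr b)) = f (c (rr b))" using g1 b by (auto simp: A_def)
    also have "\<dots> = FF x y t z (pick (c (rr b)))" by (simp add: f_def)
    also have "\<dots> = FF x y t z b"
    proof -
      let ?b1 = "pick (c (rr b))"
      have "DD ?b1 b = DD (rr ?b1) (rr b)" by (simp add: DD_rr)
      also have "\<dots> = 0" using pick[OF b] by (simp add: DD_refl)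
      finally have "dist (FF x y t z ?b1) (FF x y t z b) \<le> 0"
        using key[OF doss _ b, of ?b1] pick[OF b] by simp
      then show ?thesis by simp
    qed
    finally show ?thesis .
  qed
  have zx: "t = 0 \<Longrightarrow> z = x" using doss[rule_format, of x] by simp
  have zy: "t = 1 \<Longrightarrow> z = y" using doss[rule_format, of y] by simp
  have s0: "\<sigma> u v 0 = u" for u v
    using sA[of "(u, v, 0)"] zx by (auto simp: \<sigma>_def AS_def FF_def)
  have s1: "\<sigma> u v 1 = v" for u v
    using sA[of "(u, v, 1)"] zy by (auto simp: \<sigma>_def AS_def FF_def)
  have st: "\<sigma> x y t = z"
    using sA[of "(x, y, t)"] by (auto simp: \<sigma>_def AS_def FF_def)
  have srev: "\<sigma> u v s = \<sigma> v u (1 - s)" for u v s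
    unfolding \<sigma>_def using rr_eq[OF DD_rev[of u v s]] by simp
  have sle: "dist (\<sigma> u v s) (\<sigma> u v s') \<le> \<bar>s - s'\<bar> * dist u v" for u v s s'
    using slip[of u v s u v s'] DD_geo[of u v s s'] by linarith
  have sge: "(s' - s) * dist u v \<le> dist (\<sigma> u v s) (\<sigma> u v s')"
    if "0 \<le> s" "s \<le> s'" "s' \<le> 1" for u v s s'
  proof -
    have "dist u v \<le> dist u (\<sigma> u v s) + dist (\<sigma> u v s) (\<sigma> u v s') + dist (\<sigma> u v s') v"
      using dist_triangle[of u v "\<sigma> u v s"] dist_triangle[of "\<sigma> u v s" v "\<sigma> u v s'"] by linarith
    moreover have "dist u (\<sigma> u v s) \<le> s * dist u v"
      using sle[of u v 0 s] s0[of u v] that by simp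
    moreover have "dist (\<sigma> u v s') v \<le> (1 - s') * dist u v"
      using sle[of u v s' 1] s1[of u v] that by simp
    ultimately show ?thesis by (simp add: algebra_simps)
  qed
  have geo: "dist (\<sigma> u v s) (\<sigma> u v s') = \<bar>s - s'\<bar> * dist u v"
    if "s \<in> {0..1}" "s' \<in> {0..1}" for u v s s'
  proof (cases "s \<le> s'")
    case True
    then show ?thesis using sle[of u v s s'] sge[of s s' u v] that by auto
  next
    case False
    then show ?thesis using sle[of u v s s'] sge[of s' s u v] that by (auto simp: dist_commute)
  qed
  have "rc_bicombing \<sigma>"
    unfolding rc_bicombing_def bicombing_def conical_def reversible_def
  proof (intro conjI allI ballI)
    fix u v show "\<sigma> u v 0 = u" by (rule s0)
    fix u v show "\<sigma> u v 1 = v" by (rule s1)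
  next
    fix u v s s' assume "s \<in> {0..1::real}" "s' \<in> {0..1::real}"
    then show "dist (\<sigma> u v s) (\<sigma> u v s') = \<bar>s - s'\<bar> * dist u v" by (rule geo)
  next
    fix u v u' v' s assume "s \<in> {0..1::real}"
    then show "dist (\<sigma> u v s) (\<sigma> u' v' s) \<le> (1 - s) * dist u u' + s * dist v v'"
      using slip[of u v s u' v' s] DD_cone[of s u v u' v'] by linarith
  next
    fix u v s show "\<sigma> u v s = \<sigma> v u (1 - s)" by (rule srev)
  qed
  then show ?thesis using st by blast
qed



theorem lemma3p4:
  fixes x y :: "'a::metric_space" and t :: real
  assumes inj: "injective_metric_space TYPE('a)"
    and t: "t \<in> {0..1}"
  shows "(\<forall>z \<in> doss_expectation (two_point x y t).
            \<exists>\<sigma>. rc_bicombing \<sigma> \<and> \<sigma> x y t = z)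
     \<and> (((\<exists>\<sigma>::'a \<Rightarrow> 'a \<Rightarrow> real \<Rightarrow> 'a. rc_bicombing \<sigma>) \<and>
          (\<forall>\<sigma> \<sigma>'::'a \<Rightarrow> 'a \<Rightarrow> real \<Rightarrow> 'a. rc_bicombing \<sigma> \<longrightarrow> rc_bicombing (\<sigma>'::'a \<Rightarrow> 'a \<Rightarrow> real \<Rightarrow> 'a) \<longrightarrow>
             (\<forall>p q. \<forall>s\<in>{0..1}. \<sigma> p q s = \<sigma>' p q s)))
        \<longrightarrow> (\<exists>z. doss_expectation (two_point x y t) = {z}))"
proof -
  have D: "doss_expectation (two_point x y t) = {z. \<forall>w. dist z w \<le> (1-t)*dist x w + t*dist y w}"
    by (rule doss_two_point[OF t])
  have P1: "\<forall>z \<in> doss_expectation (two_point x y t). \<exists>\<sigma>. rc_bicombing \<sigma> \<and> \<sigma> x y t = z"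
  proof (intro ballI)
    fix z assume "z \<in> doss_expectation (two_point x y t)"
    hence "\<forall>w. dist z w \<le> (1-t)*dist x w + t*dist y w" unfolding D by simp
    thus "\<exists>\<sigma>. rc_bicombing \<sigma> \<and> \<sigma> x y t = z" by (rule construct[OF inj])
  qed
  show ?thesis
  proof (rule conjI[OF P1], rule impI)
    assume H: "(\<exists>\<sigma>::'a \<Rightarrow> 'a \<Rightarrow> real \<Rightarrow> 'a. rc_bicombing \<sigma>) \<and>
          (\<forall>\<sigma> \<sigma>'::'a \<Rightarrow> 'a \<Rightarrow> real \<Rightarrow> 'a. rc_bicombing \<sigma> \<longrightarrow> rc_bicombing \<sigma>' \<longrightarrow>
             (\<forall>p q. \<forall>s\<in>{0..1}. \<sigma> p q s = \<sigma>' p q s))"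
    then obtain \<sigma>0 :: "'a \<Rightarrow> 'a \<Rightarrow> real \<Rightarrow> 'a" where s0: "rc_bicombing \<sigma>0" by (elim conjE exE)
    have ww: "\<sigma>0 w w t = w" for w
    proof -
      have bc: "bicombing \<sigma>0" using s0 by (simp add: rc_bicombing_def)
      then have gg: "\<forall>s\<in>{0..1}. \<forall>t\<in>{0..1}. dist (\<sigma>0 w w s) (\<sigma>0 w w t) = \<bar>s - t\<bar> * dist w w"
        unfolding bicombing_def by blast
      have "dist (\<sigma>0 w w t) (\<sigma>0 w w 0) = \<bar>t - 0\<bar> * dist w w"
        using gg[rule_format, of t 0] t by simp
      moreover have "\<sigma>0 w w 0 = w" using bc unfolding bicombing_def by blast
      ultimately show ?thesis by simp
    qed
    have mem: "\<sigma>0 x y t \<in> doss_expectation (two_point x y t)"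
    proof -
      have cn: "conical \<sigma>0" using s0 by (simp add: rc_bicombing_def)
      have cn2: "\<forall>x y x' y'. \<forall>t\<in>{0..1}. dist (\<sigma>0 x y t) (\<sigma>0 x' y' t) \<le> (1 - t) * dist x x' + t * dist y y'"
        using cn unfolding conical_def .
      have c3: "\<forall>s\<in>{0..1}. dist (\<sigma>0 x y s) (\<sigma>0 w w s) \<le> (1-s)*dist x w + s*dist y w" for w
        using cn2 by blast
      have "dist (\<sigma>0 x y t) (\<sigma>0 w w t) \<le> (1-t)*dist x w + t*dist y w" for w
        using c3[of w] t by blast
      then have "dist (\<sigma>0 x y t) w \<le> (1-t)*dist x w + t*dist y w" for w using ww by simp
      then show ?thesis unfolding D by simp
    qed
    have uq: "z = \<sigma>0 x y t" if zin: "z \<in> doss_expectation (two_point x y t)" for z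
    proof -
      obtain \<sigma> where rszs: "rc_bicombing \<sigma> \<and> \<sigma> x y t = z" using bspec[OF P1 zin] by (elim exE)
      have rs: "rc_bicombing \<sigma>" and zs: "\<sigma> x y t = z" using rszs by simp_all
      have U: "\<forall>\<sigma> \<sigma>'::'a \<Rightarrow> 'a \<Rightarrow> real \<Rightarrow> 'a. rc_bicombing \<sigma> \<longrightarrow> rc_bicombing \<sigma>' \<longrightarrow>
             (\<forall>p q. \<forall>s\<in>{0..1}. \<sigma> p q s = \<sigma>' p q s)" using H by (rule conjunct2)
      have "\<forall>p q. \<forall>s\<in>{0..1}. \<sigma> p q s = \<sigma>0 p q s" using spec[OF spec[OF U, of \<sigma>], of \<sigma>0] rs s0 by simp
      then have "\<forall>s\<in>{0..1}. \<sigma> x y s = \<sigma>0 x y s" by blast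
      then have "\<sigma> x y t = \<sigma>0 x y t" using t by blast
      then show ?thesis using zs by simp
    qed
    have "doss_expectation (two_point x y t) = {\<sigma>0 x y t}"
    proof (intro equalityI subsetI)
      fix z assume "z \<in> doss_expectation (two_point x y t)"
      then show "z \<in> {\<sigma>0 x y t}" using uq by simp
    next
      fix z assume "z \<in> {\<sigma>0 x y t}"
      then show "z \<in> doss_expectation (two_point x y t)" using mem by simp
    qed
    then show "\<exists>z. doss_expectation (two_point x y t) = {z}" by (rule exI)
  qed
qed

end
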